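(* For $n\ge 5$, any generating set of the semigroup $\mathbf{W}^{\ge 6}_{\mathrm{bf}}(n)$ has at least $(n-2)^{n-3}+(n-3)2^{n-3}-1$ elements.
   Context: Let $Q=\{0,\dots,n-1\}$ and $Q_M=\{1,\dots,n-3\}$. Transformations of $Q$ act on the right, $q(st)=(qs)t$. Let $\mathbf{B}_{\mathrm{bf}}(n)$ be the set of all transformations $t$ of $Q$ with $0\notin Qt$, $(n-1)t=n-1$, $(n-2)t=n-1$, and for all $j\ge1$, either $0t^j=n-1$ or $0t^j\ne qt^j$ for all $0<q<n-1$. Then $\mathbf{W}^{\ge 6}_{\mathrm{bf}}(n)=\{t\in\mathbf{B}_{\mathrm{bf}}(n)\mid 0t\in\{n-2,n-1\}$, or $0t\in Q_M$ and $qt\in\{n-2,n-1\}$ for all $q\in Q_M\}$, a semigroup under composition. *)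

theory Defs
  imports Main
begin

text \<open>Transformations of Q = {0..<n}, represented as functions nat => nat
  that map Q into Q and are the identity outside Q (canonical representative).\<close>
definition transf :: "nat \<Rightarrow> (nat \<Rightarrow> nat) set" where
  "transf n = {t. (\<forall>q<n. t q < n) \<and> (\<forall>q\<ge>n. t q = q)}"

text \<open>Right action: q (s t) = (q s) t, so the product s t is t o s.\<close>
definition tmul :: "(nat \<Rightarrow> nat) \<Rightarrow> (nat \<Rightarrow> nat) \<Rightarrow> (nat \<Rightarrow> nat)" where
  "tmul s t = t \<circ> s"

definition QM :: "nat \<Rightarrow> nat set" where
  "QM n = {1..n-3}"

definition Bbf :: "nat \<Rightarrow> (nat \<Rightarrow> nat) set" where
  "Bbf n = {t \<in> transf n.
     0 \<notin> t ` {0..<n} \<and> t (n-1) = n-1 \<and> t (n-2) = n-1 \<and>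
     (\<forall>j\<ge>1. (t ^^ j) 0 = n-1 \<or> (\<forall>q. 0 < q \<and> q < n-1 \<longrightarrow> (t ^^ j) 0 \<noteq> (t ^^ j) q))}"

definition Wbf6 :: "nat \<Rightarrow> (nat \<Rightarrow> nat) set" where
  "Wbf6 n = {t \<in> Bbf n. t 0 \<in> {n-2, n-1} \<or>
                (t 0 \<in> QM n \<and> (\<forall>q\<in>QM n. t q \<in> {n-2, n-1}))}"

inductive_set gen_sg :: "(nat \<Rightarrow> nat) set \<Rightarrow> (nat \<Rightarrow> nat) set" for G where
  base: "g \<in> G \<Longrightarrow> g \<in> gen_sg G"
| mul: "a \<in> gen_sg G \<Longrightarrow> b \<in> gen_sg G \<Longrightarrow> tmul a b \<in> gen_sg G"

end

theory Submission
  imports Defs "HOL-Library.FuncSet"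
begin

lemma funpow_fix: "t y = y \<Longrightarrow> (t ^^ j) y = y"
  by (induction j) auto

lemma funpow_SS: "(t ^^ Suc (Suc i)) x = (t ^^ i) (t (t x))"
  by (simp add: funpow_Suc_right del: funpow.simps)


definition extW :: "nat \<Rightarrow> nat \<Rightarrow> (nat \<Rightarrow> nat) \<Rightarrow> nat \<Rightarrow> nat" where
  "extW n c f = (\<lambda>q. if q = 0 then c else if q \<in> QM n then f q else if q < n then n-1 else q)"

lemma extW_simps:
  assumes "n \<ge> 5"
  shows "extW n c f 0 = c" "extW n c f (n-1) = n-1" "extW n c f (n-2) = n-1"
    "q \<in> QM n \<Longrightarrow> extW n c f q = f q"
  using assms by (auto simp: extW_def QM_def)

lemma W_facts:
  assumes "t \<in> Wbf6 n"
  shows "\<And>q. q < n \<Longrightarrow> t q < n" "\<And>q. q < n \<Longrightarrow> t q \<noteq> 0" "t (n-1) = n-1" "t (n-2) = n-1"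
    "t 0 \<in> {n-2,n-1} \<or> (t 0 \<in> QM n \<and> (\<forall>q\<in>QM n. t q \<in> {n-2,n-1}))"
    "\<And>j. j \<ge> 1 \<Longrightarrow> (t ^^ j) 0 = n-1 \<or> (\<forall>q. 0 < q \<and> q < n-1 \<longrightarrow> (t ^^ j) 0 \<noteq> (t ^^ j) q)"
  using assms unfolding Wbf6_def Bbf_def transf_def by auto

lemma I1_mem:
  assumes n: "n \<ge> 5" and f: "f \<in> PiE (QM n) (\<lambda>_. insert (n-1) (QM n))"
  shows "extW n (n-2) f \<in> Wbf6 n"
proof -
  let ?t = "extW n (n-2) f"
  have fq: "q \<in> QM n \<Longrightarrow> f q \<in> insert (n-1) (QM n)" for q using f by auto
  have fl: "q \<in> QM n \<Longrightarrow> f q < n" for q using fq[of q] n by (auto simp: QM_def)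
  have tr: "?t \<in> transf n"
    unfolding transf_def using fl n by (auto simp: extW_def QM_def)
  have f0: "q \<in> QM n \<Longrightarrow> f q \<noteq> 0" for q using fq[of q] n by (auto simp: QM_def)
  have nz: "0 \<notin> ?t ` {0..<n}"
    unfolding extW_def using n by (auto split: if_splits dest: f0)
  have s: "?t 0 = n-2" "?t (n-1) = n-1" "?t (n-2) = n-1" using extW_simps n by auto
  have j1: "?t 0 \<noteq> ?t q" if "0 < q" "q < n-1" for q
  proof -
    have fne: "q \<in> QM n \<Longrightarrow> f q \<noteq> n-2" for q using fq[of q] n by (auto simp: QM_def)
    show ?thesis
    proof (cases "q \<in> QM n")
      case True then show ?thesis using fne[OF True] extW_simps[OF n] by simp
    next
      case False then have "q = n-2" using that by (auto simp: QM_def)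
      then show ?thesis using extW_simps[OF n] n by simp
    qed
  qed
  have jj: "(?t ^^ j) 0 = n-1 \<or> (\<forall>q. 0 < q \<and> q < n-1 \<longrightarrow> (?t ^^ j) 0 \<noteq> (?t ^^ j) q)"
    if "j \<ge> 1" for j
  proof (cases "j = 1")
    case True then show ?thesis using j1 by simp
  next
    case False
    define i where "i = j - 2"
    have "j = Suc (Suc i)" using that False unfolding i_def by arith
    then have "(?t ^^ j) 0 = (?t ^^ i) (?t (?t 0))" using funpow_SS by simp
    also have "\<dots> = n-1" using s funpow_fix[of ?t "n-1"] by simp
    finally show ?thesis by simp
  qed
  show ?thesis unfolding Wbf6_def Bbf_def using tr nz s jj by auto
qed

lemma I2_mem:
  assumes n: "n \<ge> 5" and c: "c \<in> QM n" and f: "f \<in> PiE (QM n) (\<lambda>_. {n-2, n-1})"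
  shows "extW n c f \<in> Wbf6 n"
proof -
  let ?t = "extW n c f"
  have fq: "q \<in> QM n \<Longrightarrow> f q \<in> {n-2,n-1}" for q using f by auto
  have fl: "q \<in> QM n \<Longrightarrow> f q < n" for q using fq[of q] n by (auto simp: QM_def)
  have tr: "?t \<in> transf n"
    unfolding transf_def using fl n c by (auto simp: extW_def QM_def)
  have f0: "q \<in> QM n \<Longrightarrow> f q \<noteq> 0" for q using fq[of q] n by (auto simp: QM_def)
  have c0: "c \<noteq> 0" using c by (simp add: QM_def)
  have nz: "0 \<notin> ?t ` {0..<n}"
    unfolding extW_def using n c0 by (auto split: if_splits dest: f0)
  have s: "?t 0 = c" "?t (n-1) = n-1" "?t (n-2) = n-1" using extW_simps n by auto
  have j1: "?t 0 \<noteq> ?t q" if "0 < q" "q < n-1" for q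
  proof -
    have fne: "q \<in> QM n \<Longrightarrow> f q \<noteq> c" for q using fq[of q] n c by (auto simp: QM_def)
    have "c \<noteq> n-1" using c n by (auto simp: QM_def)
    show ?thesis
    proof (cases "q \<in> QM n")
      case True then show ?thesis using fne[OF True] extW_simps[OF n] by simp
    next
      case False then have "q = n-2" using that by (auto simp: QM_def)
      then show ?thesis using extW_simps[OF n] \<open>c \<noteq> n-1\<close> by simp
    qed
  qed
  have tt: "?t (?t q) = n-1" if "0 < q" "q < n-1" for q
  proof (cases "q \<in> QM n")
    case True then show ?thesis using fq[OF True] s extW_simps(4)[OF n True] by auto
  next
    case False
    then have "q = n-2" using that by (auto simp: QM_def)
    then show ?thesis using s by simp
  qed
  have jj: "(?t ^^ j) 0 = n-1 \<or> (\<forall>q. 0 < q \<and> q < n-1 \<longrightarrow> (?t ^^ j) 0 \<noteq> (?t ^^ j) q)"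
    if "j \<ge> 1" for j
  proof (cases "j = 1")
    case True then show ?thesis using j1 by simp
  next
    case False
    define i where "i = j - 2"
    have i: "j = Suc (Suc i)" using that False unfolding i_def by arith
    have "(?t ^^ j) q = n-1" if "0 < q" "q < n-1" for q
    proof -
      have "(?t ^^ j) q = (?t ^^ i) (?t (?t q))" using i funpow_SS by simp
      also have "\<dots> = n-1" using tt[OF that] funpow_fix[of ?t "n-1"] s by simp
      finally show ?thesis .
    qed
    then show ?thesis by auto
  qed
  have w: "?t 0 \<in> QM n \<and> (\<forall>q\<in>QM n. ?t q \<in> {n-2, n-1})" using s c fq extW_simps(4)[OF n] by auto
  show ?thesis unfolding Wbf6_def Bbf_def using tr nz s jj w by auto
qed


lemma irred:
  assumes n: "n \<ge> 5" and gen: "gen_sg G = Wbf6 n" and u: "u \<in> gen_sg G"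
    and u0: "u 0 = n-2 \<or> u 0 \<in> QM n" and nall: "\<not> (\<forall>q\<in>QM n. u q = n-1)"
  shows "u \<in> G"
  using u
proof cases
  case base then show ?thesis .
next
  case (mul a b)
  have a: "a \<in> Wbf6 n" and b: "b \<in> Wbf6 n" using mul gen by auto
  have uab: "u = b \<circ> a" using mul by (simp add: tmul_def)
  note bf = W_facts[OF b]
  from W_facts(5)[OF a] show ?thesis
  proof
    assume "a 0 \<in> {n-2, n-1}"
    then have "u 0 = n-1" using uab bf by auto
    with u0 n show ?thesis by (auto simp: QM_def)
  next
    assume "a 0 \<in> QM n \<and> (\<forall>q\<in>QM n. a q \<in> {n-2, n-1})"
    then have "\<forall>q\<in>QM n. u q = n-1" using uab bf by auto
    with nall show ?thesis by simp
  qed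
qed

definition I3 :: "nat \<Rightarrow> nat \<Rightarrow> (nat \<Rightarrow> nat) set" where
  "I3 n k = {u \<in> Wbf6 n. u 0 = n-1 \<and> inj_on u (QM n) \<and> u ` QM n = insert (n-2) (QM n - {k})}"

lemma W_range:
  assumes "t \<in> Wbf6 n" "n \<ge> 5" "q \<in> QM n"
  shows "t q \<in> QM n \<or> t q = n-2 \<or> t q = n-1"
proof -
  have "q < n" using assms by (auto simp: QM_def)
  then have "t q < n" "t q \<noteq> 0" using W_facts[OF assms(1)] by auto
  then show ?thesis by (auto simp: QM_def)
qed

lemma I3_gen:
  assumes n: "n \<ge> 5" and gen: "gen_sg G = Wbf6 n" and k: "k \<in> QM n"
  shows "u \<in> gen_sg G \<Longrightarrow> u \<in> I3 n k \<Longrightarrow> \<exists>g\<in>G. g \<in> I3 n k"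
proof (induction u rule: gen_sg.induct)
  case (base g) then show ?case by blast
next
  case (mul a b)
  have a: "a \<in> Wbf6 n" and b: "b \<in> Wbf6 n" using mul gen by auto
  let ?u = "tmul a b"
  have uab: "?u = b \<circ> a" by (simp add: tmul_def)
  have uI: "?u 0 = n-1" "inj_on ?u (QM n)" "?u ` QM n = insert (n-2) (QM n - {k})"
    using mul.prems by (auto simp: I3_def)
  note bf = W_facts[OF b]
  have uq: "?u q \<noteq> n-1" if "q \<in> QM n" for q
  proof -
    have "?u q \<in> insert (n-2) (QM n - {k})" using uI(3) that by blast
    then show ?thesis using n by (auto simp: QM_def)
  qed
  have aQ: "a ` QM n \<subseteq> QM n"
  proof
    fix x assume "x \<in> a ` QM n"
    then obtain q where q: "q \<in> QM n" "x = a q" by blast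
    from W_range[OF a n q(1)] show "x \<in> QM n"
    proof (elim disjE)
      assume "a q = n-2" then have "?u q = n-1" using uab bf by simp
      with uq q show ?thesis by simp
    next
      assume "a q = n-1" then have "?u q = n-1" using uab bf by simp
      with uq q show ?thesis by simp
    qed (use q in simp)
  qed
  have ainj: "inj_on a (QM n)" using uI(2) uab inj_on_imageI2 by metis
  have aeq: "a ` QM n = QM n"
    by (rule endo_inj_surj[OF _ aQ ainj]) (simp add: QM_def)
  have bim: "b ` QM n = insert (n-2) (QM n - {k})"
    using uI(3) uab aeq by (metis image_comp)
  have binj: "inj_on b (QM n)" using uI(2) uab aeq inj_on_imageI by metis
  obtain q' where q': "q' \<in> QM n" "q' \<noteq> k"
  proof
    show "(if k = 1 then 2 else 1) \<in> QM n" using n by (auto simp: QM_def)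
  qed auto
  have b0: "b 0 = n-1"
  proof -
    from bf(5) have "b 0 = n-2 \<or> b 0 = n-1 \<or> (b 0 \<in> QM n \<and> (\<forall>q\<in>QM n. b q \<in> {n-2, n-1}))" by auto
    then show ?thesis
    proof (elim disjE)
      assume b2: "b 0 = n-2"
      have "n-2 \<in> b ` QM n" using bim by blast
      then obtain q where q: "q \<in> QM n" "b q = n-2" by (metis imageE)
      have "0 < q" "q < n-1" using q n by (auto simp: QM_def)
      with bf(6)[of 1] b2 q n show ?thesis by auto
    next
      assume H: "b 0 \<in> QM n \<and> (\<forall>q\<in>QM n. b q \<in> {n-2, n-1})"
      have "q' \<in> b ` QM n" using bim q' by blast
      then obtain q where q: "q \<in> QM n" "b q = q'" by (metis imageE)
      with H have "q' \<in> {n-2,n-1}" by auto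
      with q' n show ?thesis by (auto simp: QM_def)
    qed simp
  qed
  have "b \<in> I3 n k" using b b0 binj bim by (auto simp: I3_def)
  then show ?case using mul.IH(2) by blast
qed


lemma ek_I3:
  assumes n: "n \<ge> 5" and k: "k \<in> QM n"
  shows "extW n (n-1) (\<lambda>q. if q = k then n-2 else q) \<in> I3 n k"
proof -
  define f where "f = (\<lambda>q::nat. if q = k then n-2 else q)"
  let ?t = "extW n (n-1) f"
  have fl: "q \<in> QM n \<Longrightarrow> f q < n" for q using n by (auto simp: QM_def f_def)
  have tr: "?t \<in> transf n"
    unfolding transf_def using fl n by (auto simp: extW_def QM_def)
  have f0: "q \<in> QM n \<Longrightarrow> f q \<noteq> 0" for q using n by (auto simp: QM_def f_def)
  have nz: "0 \<notin> ?t ` {0..<n}"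
    unfolding extW_def using n by (auto split: if_splits dest: f0)
  have s: "?t 0 = n-1" "?t (n-1) = n-1" "?t (n-2) = n-1" using extW_simps n by auto
  have jj: "(?t ^^ j) 0 = n-1" if "j \<ge> 1" for j
  proof -
    define i where "i = j - 1"
    have i: "j = Suc i" using that unfolding i_def by arith
    have "(?t ^^ j) 0 = (?t ^^ i) (?t 0)" using i by (simp add: funpow_Suc_right del: funpow.simps)
    also have "\<dots> = n-1" using s funpow_fix[of ?t "n-1"] by simp
    finally show ?thesis .
  qed
  have w: "?t \<in> Wbf6 n" unfolding Wbf6_def Bbf_def using tr nz s jj by auto
  have eq: "\<And>q. q \<in> QM n \<Longrightarrow> ?t q = f q" using extW_simps(4)[OF n] by blast
  have inj: "inj_on ?t (QM n)"
  proof (rule inj_onI)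
    fix x y assume xy: "x \<in> QM n" "y \<in> QM n" "?t x = ?t y"
    then have "f x = f y" using eq by simp
    then show "x = y" using xy(1,2) n by (auto simp: f_def QM_def split: if_splits)
  qed
  have "?t ` QM n = f ` QM n" using eq by (simp cong: image_cong)
  also have "\<dots> = insert (n-2) (QM n - {k})"
    using k by (auto simp: f_def)
  finally show ?thesis using w s inj unfolding I3_def f_def by auto
qed

lemma finite_W: "finite (Wbf6 n)"
proof -
  have sub: "Wbf6 n \<subseteq> transf n" by (auto simp: Wbf6_def Bbf_def)
  have inj: "inj_on (\<lambda>t. restrict t {0..<n}) (transf n)"
  proof (rule inj_onI)
    fix s t assume st: "s \<in> transf n" "t \<in> transf n" "restrict s {0..<n} = restrict t {0..<n}"
    show "s = t"
    proof
      fix q show "s q = t q"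
      proof (cases "q < n")
        case True then show ?thesis using fun_cong[OF st(3), of q] by simp
      next
        case False then show ?thesis using st(1,2) by (auto simp: transf_def)
      qed
    qed
  qed
  have "(\<lambda>t. restrict t {0..<n}) ` transf n \<subseteq> PiE {0..<n} (\<lambda>_. {0..<n})"
    by (auto simp: transf_def)
  then have "finite ((\<lambda>t. restrict t {0..<n}) ` transf n)"
    by (rule finite_subset) (simp add: finite_PiE)
  then have "finite (transf n)" using finite_imageD inj by blast
  then show ?thesis using sub finite_subset by blast
qed

lemma extW_inj:
  assumes n: "n \<ge> 5" and e: "extW n c f = extW n c' f'"
    and f: "f \<in> extensional (QM n)" and f': "f' \<in> extensional (QM n)"
  shows "c = c' \<and> f = f'"
proof
  show "c = c'" using fun_cong[OF e, of 0] extW_simps(1)[OF n] by simp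
  show "f = f'"
  proof (rule extensionalityI[OF f f'])
    fix q assume "q \<in> QM n"
    then show "f q = f' q" using fun_cong[OF e, of q] extW_simps(4)[OF n] by simp
  qed
qed

lemma card_QM: "card (QM n) = n - 3" by (simp add: QM_def)


theorem mainTheorem8:
  fixes n :: nat and G :: "(nat \<Rightarrow> nat) set"
  assumes "n \<ge> 5"
    and "G \<subseteq> Wbf6 n"
    and "gen_sg G = Wbf6 n"
  shows "card G \<ge> (n-2)^(n-3) + (n-3) * 2^(n-3) - 1"
proof -
  note n = assms(1) and gen = assms(3)
  define cst where "cst = restrict (\<lambda>_::nat. n-1) (QM n)"
  define P1 where "P1 = PiE (QM n) (\<lambda>_. insert (n-1) (QM n))"
  define P2 where "P2 = PiE (QM n) (\<lambda>_. {n-2, n-1})"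
  define F1 where "F1 = P1 - {cst}"
  define F2 where "F2 = QM n \<times> (P2 - {cst})"
  define S1 where "S1 = extW n (n-2) ` F1"
  define S2 where "S2 = (\<lambda>(c,f). extW n c f) ` F2"
  have finQ: "finite (QM n)" by (simp add: QM_def)
  have cst1: "cst \<in> P1" unfolding cst_def P1_def by auto
  have cst2: "cst \<in> P2" unfolding cst_def P2_def by auto
  have notcst: "\<not> (\<forall>q\<in>QM n. extW n c f q = n-1)" if "f \<in> PiE (QM n) B" "f \<noteq> cst" for c f B
  proof
    assume H: "\<forall>q\<in>QM n. extW n c f q = n-1"
    have "f = cst"
    proof (rule extensionalityI)
      show "f \<in> extensional (QM n)" using that by (simp add: PiE_iff)
      show "cst \<in> extensional (QM n)" by (simp add: cst_def)
      fix q assume "q \<in> QM n"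
      then show "f q = cst q" using H extW_simps(4)[OF n] by (simp add: cst_def)
    qed
    with that show False by simp
  qed
  have S1G: "S1 \<subseteq> G"
  proof
    fix x assume "x \<in> S1"
    then obtain f where f: "f \<in> F1" "x = extW n (n-2) f" by (auto simp: S1_def)
    have "x \<in> gen_sg G" using gen I1_mem[OF n, of f] f by (simp add: F1_def P1_def)
    moreover have "x 0 = n-2" using f extW_simps[OF n] by simp
    moreover have "\<not> (\<forall>q\<in>QM n. x q = n-1)" using notcst[of f] f by (auto simp: F1_def P1_def)
    ultimately show "x \<in> G" using irred[OF n gen] by blast
  qed
  have S2G: "S2 \<subseteq> G"
  proof
    fix x assume "x \<in> S2"
    then obtain c f where f: "c \<in> QM n" "f \<in> P2 - {cst}" "x = extW n c f" by (auto simp: S2_def F2_def)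
    have "x \<in> gen_sg G" using gen I2_mem[OF n, of c f] f by (simp add: P2_def)
    moreover have "x 0 \<in> QM n" using f extW_simps[OF n] by simp
    moreover have "\<not> (\<forall>q\<in>QM n. x q = n-1)" using notcst[of f] f by (auto simp: P2_def)
    ultimately show "x \<in> G" using irred[OF n gen] by blast
  qed
  have ex: "\<forall>k\<in>QM n. \<exists>g. g \<in> G \<and> g \<in> I3 n k"
  proof
    fix k assume k: "k \<in> QM n"
    have e: "extW n (n-1) (\<lambda>q. if q = k then n-2 else q) \<in> I3 n k" by (rule ek_I3[OF n k])
    then have "extW n (n-1) (\<lambda>q. if q = k then n-2 else q) \<in> gen_sg G" using gen by (simp add: I3_def)
    then show "\<exists>g. g \<in> G \<and> g \<in> I3 n k" using I3_gen[OF n gen k] e by blast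
  qed
  then obtain h where h: "\<forall>k\<in>QM n. h k \<in> G \<and> h k \<in> I3 n k" by metis
  define S3 where "S3 = h ` QM n"
  have S3G: "S3 \<subseteq> G" using h by (auto simp: S3_def)
  have hinj: "inj_on h (QM n)"
  proof (rule inj_onI)
    fix k k' assume kk: "k \<in> QM n" "k' \<in> QM n" "h k = h k'"
    have hk: "h k ` QM n = insert (n-2) (QM n - {k})" using h kk(1) by (simp add: I3_def)
    have hk': "h k' ` QM n = insert (n-2) (QM n - {k'})" using h kk(2) by (simp add: I3_def)
    have E: "insert (n-2) (QM n - {k}) = insert (n-2) (QM n - {k'})"
      using hk hk' kk(3) by simp
    show "k = k'"
    proof (rule ccontr)
      assume "k \<noteq> k'"
      then have "k' \<in> insert (n-2) (QM n - {k})" using kk(2) by simp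
      then have "k' \<in> insert (n-2) (QM n - {k'})" using E by simp
      moreover have "k' \<noteq> n-2" using kk(2) n by (auto simp: QM_def)
      ultimately show False by simp
    qed
  qed
  have finF1: "finite F1" unfolding F1_def P1_def using finQ by (simp add: finite_PiE)
  have finF2: "finite F2" unfolding F2_def P2_def using finQ by (simp add: finite_PiE)
  have cP1: "card P1 = (n-2)^(n-3)"
  proof -
    have "n-1 \<notin> QM n" using n by (auto simp: QM_def)
    then have "card (insert (n-1) (QM n)) = Suc (n-3)" using finQ by (simp add: card_QM)
    also have "\<dots> = n-2" using n by simp
    finally have "card (insert (n-1) (QM n)) = n-2" .
    then show ?thesis unfolding P1_def using finQ by (simp add: card_PiE card_QM)
  qed
  have cP2: "card P2 = 2^(n-3)"
  proof -
    have "card {n-2, n-1} = 2" using n by simp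
    then show ?thesis unfolding P2_def using finQ by (simp add: card_PiE card_QM)
  qed
  have cS1: "card S1 = (n-2)^(n-3) - 1"
  proof -
    have "inj_on (extW n (n-2)) F1"
      by (rule inj_onI) (use extW_inj[OF n] in \<open>auto simp: F1_def P1_def PiE_iff\<close>)
    then have "card S1 = card F1" by (simp add: S1_def card_image)
    also have "\<dots> = (n-2)^(n-3) - 1" using cP1 cst1 finQ
      by (simp add: F1_def P1_def card_Diff_singleton finite_PiE)
    finally show ?thesis .
  qed
  have cS2: "card S2 = (n-3) * (2^(n-3) - 1)"
  proof -
    have "inj_on (\<lambda>(c,f). extW n c f) F2"
      by (rule inj_onI) (use extW_inj[OF n] in \<open>auto simp: F2_def P2_def PiE_iff\<close>)
    then have "card S2 = card F2" by (simp add: S2_def card_image)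
    also have "\<dots> = (n-3) * (2^(n-3) - 1)" using cP2 cst2 finQ
      by (simp add: F2_def P2_def card_Diff_singleton finite_PiE card_cartesian_product card_QM)
    finally show ?thesis .
  qed
  have cS3: "card S3 = n-3" using hinj by (simp add: S3_def card_image card_QM)
  have d12: "S1 \<inter> S2 = {}"
  proof -
    have "x 0 = n-2" if "x \<in> S1" for x using that extW_simps[OF n] by (auto simp: S1_def)
    moreover have "x 0 \<in> QM n" if "x \<in> S2" for x using that extW_simps[OF n] by (auto simp: S2_def F2_def)
    ultimately show ?thesis using n by (fastforce simp: QM_def)
  qed
  have d3: "(S1 \<union> S2) \<inter> S3 = {}"
  proof -
    have "x 0 = n-2" if "x \<in> S1" for x using that extW_simps[OF n] by (auto simp: S1_def)
    moreover have "x 0 \<in> QM n" if "x \<in> S2" for x using that extW_simps[OF n] by (auto simp: S2_def F2_def)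
    moreover have "x 0 = n-1" if "x \<in> S3" for x using that h by (auto simp: S3_def I3_def)
    ultimately show ?thesis using n by (fastforce simp: QM_def)
  qed
  have finS: "finite S1" "finite S2" "finite S3"
    using finF1 finF2 finQ by (auto simp: S1_def S2_def S3_def)
  have "card (S1 \<union> S2 \<union> S3) = card S1 + card S2 + card S3"
    using d12 d3 finS by (simp add: card_Un_disjoint)
  also have "\<dots> = (n-2)^(n-3) + (n-3) * 2^(n-3) - 1"
  proof -
    have a: "(n-2)^(n-3) \<ge> (1::nat)" using n by simp
    have b: "2^(n-3) \<ge> (1::nat)" by simp
    have "(n-3) * (2^(n-3) - 1) + (n-3) = (n-3) * (2^(n-3)::nat)"
      using b by (simp add: diff_mult_distrib2)
    moreover have "\<And>A X Y :: nat. A \<ge> 1 \<Longrightarrow> X = Y \<Longrightarrow> (A - 1) + X = A + Y - 1" by arith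
    ultimately show ?thesis using cS1 cS2 cS3 a by (metis add.assoc)
  qed
  finally have "card (S1 \<union> S2 \<union> S3) = (n-2)^(n-3) + (n-3) * 2^(n-3) - 1" .
  moreover have "card (S1 \<union> S2 \<union> S3) \<le> card G"
    by (rule card_mono) (use finite_subset[OF assms(2) finite_W] S1G S2G S3G in auto)
  ultimately show ?thesis by simp
qed

end
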